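(* Let $h(z)\in\mathbb{C}[z]$ be a polynomial which cannot be written as a polynomial in $z^m$ for any integer $m>1$. Then there is a nonempty open set $U\subset D$ such that $\frac{h(z)-h(w)}{z-w}\neq 0$ for all $w\in U$ and all $z\in\overline{D}$.
   Context: $D=\{z\in\mathbb{C}:|z|<1\}$ and $\overline{D}$ is its closure. The quotient $\frac{h(z)-h(w)}{z-w}$ is understood as the polynomial in $(z,w)$ obtained by division (so at $z=w$ it equals $h'(w)$). *)

theory Defs
  imports "HOL-Analysis.Analysis" "HOL-Computational_Algebra.Polynomial"
begin

text \<open>Evaluation of the divided-difference polynomial (h(z) - h(w))/(z - w) in C[z,w];
  on the diagonal z = w it equals h'(w).\<close>
definition diff_quot :: "complex poly \<Rightarrow> complex \<Rightarrow> complex \<Rightarrow> complex" where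
  "diff_quot h z w =
     (if z = w then poly (pderiv h) w else (poly h z - poly h w) / (z - w))"

end

theory Submission
  imports Defs "HOL-Computational_Algebra.Field_as_Ring" "HOL-Computational_Algebra.Fundamental_Theorem_Algebra" "Subresultants.Subresultant_Gcd"
begin


lemma poly_sum_lt:
  fixes q :: "'a::comm_semiring_1 poly"
  assumes "\<And>i. i \<ge> N \<Longrightarrow> coeff q i = 0"
  shows "poly q z = (\<Sum>i<N. coeff q i * z^i)"
proof -
  define M where "M = max N (Suc (degree q))"
  have "poly q z = (\<Sum>i\<le>degree q. coeff q i * z^i)" by (rule poly_altdef)
  also have "\<dots> = (\<Sum>i<M. coeff q i * z^i)"
    by (rule sum.mono_neutral_left) (auto simp: M_def coeff_eq_0)
  also have "\<dots> = (\<Sum>i<N. coeff q i * z^i)"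
    by (rule sum.mono_neutral_right) (auto simp: M_def assms)
  finally show ?thesis .
qed

lemma lim_zero_bound:
  fixes p :: "complex poly"
  assumes d: "\<delta> > 0" and H: "\<And>w. w \<noteq> 0 \<Longrightarrow> norm w \<le> \<delta> \<Longrightarrow> norm (poly p w) \<le> K * norm w"
  shows "poly p 0 = 0"
proof -
  have lim1: "((\<lambda>w. norm (poly p w)) \<longlongrightarrow> norm (poly p 0)) (at (0::complex))"
    by (intro tendsto_intros isCont_tendsto_compose[of _ "poly p"]) (auto intro: continuous_intros)
  have lim2: "((\<lambda>w. K * norm w) \<longlongrightarrow> K * norm (0::complex)) (at (0::complex))"
    by (intro tendsto_intros)
  have ev: "eventually (\<lambda>w. norm (poly p w) \<le> K * norm w) (at (0::complex))"
    unfolding eventually_at using d H by (auto simp: dist_norm intro!: exI[of _ \<delta>])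
  have "norm (poly p 0) \<le> K * norm (0::complex)"
    by (rule tendsto_le[OF _ lim2 lim1 ev]) simp
  thus ?thesis by simp
qed

lemma GL1:
  fixes p :: "complex poly"
  assumes d: "\<delta> > 0" and d1: "\<delta> \<le> 1"
  and H: "\<And>w. w \<noteq> 0 \<Longrightarrow> norm w \<le> \<delta> \<Longrightarrow> norm (poly p w) \<le> K * norm w ^ e"
  shows "\<forall>j<e. coeff p j = 0"
  using H
proof (induction e arbitrary: p)
  case 0 thus ?case by simp
next
  case (Suc e)
  have p0: "poly p 0 = 0"
  proof (rule lim_zero_bound[OF d])
    fix w :: complex assume w: "w \<noteq> 0" "norm w \<le> \<delta>"
    have "norm w ^ e \<le> 1" using w d1 by (simp add: power_le_one)
    hence "K * norm w ^ Suc e \<le> K * norm w" if "K \<ge> 0"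
      using that by (simp add: mult_left_mono mult_right_le_one_le mult.commute mult.left_commute)
    moreover have "K \<ge> 0"
    proof -
      have pos: "norm w ^ Suc e > 0" using w by simp
      have "0 \<le> K * norm w ^ Suc e" using Suc.prems[OF w] norm_ge_zero order_trans by blast
      thus ?thesis using pos by (simp add: zero_le_mult_iff)
    qed
    ultimately show "norm (poly p w) \<le> (max K 0) * norm w" using Suc.prems[OF w] by simp
  qed
  obtain a p' where pc: "p = pCons a p'" by (cases p) auto
  have a0: "a = 0" using p0 by (simp add: pc)
  have "\<forall>j<e. coeff p' j = 0"
  proof (rule Suc.IH)
    fix w :: complex assume w: "w \<noteq> 0" "norm w \<le> \<delta>"
    have "norm (poly p w) = norm w * norm (poly p' w)" by (simp add: pc a0 norm_mult)
    hence "norm w * norm (poly p' w) \<le> norm w * (K * norm w ^ e)"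
      using Suc.prems[OF w] by (simp add: mult_ac)
    thus "norm (poly p' w) \<le> K * norm w ^ e" using w by simp
  qed
  thus ?case by (auto simp: pc a0 less_Suc_eq_0_disj)
qed


lemma GL2:
  fixes p :: "complex poly"
  assumes H: "\<And>w. norm w \<ge> 1 \<Longrightarrow> norm (poly p w) \<le> K * norm w ^ e"
  shows "degree p \<le> e"
proof (rule ccontr)
  assume "\<not> degree p \<le> e"
  hence D: "degree p > e" by simp
  hence p0: "p \<noteq> 0" by auto
  define q where "q = reflect_poly p"
  have "\<forall>j<degree p - e. coeff q j = 0"
  proof (rule GL1[of 1])
    fix u :: complex assume u: "u \<noteq> 0" "norm u \<le> 1"
    have "norm (inverse u) \<ge> 1" using u by (simp add: norm_inverse one_le_inverse_iff)
    hence b: "norm (poly p (inverse u)) \<le> K * norm (inverse u) ^ e" by (rule H)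
    have "poly q u = u ^ degree p * poly p (inverse u)" unfolding q_def by (rule poly_reflect_poly_nz[OF u(1)])
    hence "norm (poly q u) = norm u ^ degree p * norm (poly p (inverse u))" by (simp add: norm_mult norm_power)
    also have "\<dots> \<le> norm u ^ degree p * (K * norm (inverse u) ^ e)" using b by (simp add: mult_left_mono)
    also have "\<dots> = K * (norm u ^ degree p * inverse (norm u ^ e))" by (simp add: norm_inverse power_inverse mult_ac)
    also have "norm u ^ degree p * inverse (norm u ^ e) = norm u ^ (degree p - e)"
      using u D by (simp add: power_diff field_simps)
    finally show "norm (poly q u) \<le> K * norm u ^ (degree p - e)" .
  qed auto
  hence "coeff q 0 = 0" using D by auto
  thus False using p0 by (simp add: q_def)
qed

lemma coeff_prod_bound:
  fixes r :: "nat \<Rightarrow> complex"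
  assumes "\<And>i. i < m \<Longrightarrow> norm (r i) \<le> R" and R: "R \<ge> 0"
  shows "norm (coeff (\<Prod>i<m. [:- r i, 1:]) j) \<le> real (m choose j) * R ^ (m - j)"
  using assms(1)
proof (induction m arbitrary: j)
  case 0 thus ?case by (cases j) auto
next
  case (Suc m)
  define P where "P = (\<Prod>i<m. [:- r i, 1:])"
  have IH: "norm (coeff P j) \<le> real (m choose j) * R ^ (m - j)" for j
    unfolding P_def using Suc by auto
  have rm: "norm (r m) \<le> R" using Suc.prems by auto
  have prod: "(\<Prod>i<Suc m. [:- r i, 1:]) = [:- r m, 1:] * P" by (simp add: P_def mult.commute)
  have cf: "coeff ([:- r m, 1:] * P) j = (if j = 0 then 0 else coeff P (j - 1)) - r m * coeff P j"
    by (cases j) (simp_all add: algebra_simps)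
  have b2: "norm (r m * coeff P j) \<le> R * (real (m choose j) * R ^ (m - j))"
    unfolding norm_mult by (rule mult_mono[OF rm IH]) (use R in auto)
  show ?case
  proof (cases j)
    case 0
    have "norm (coeff ([:- r m, 1:] * P) j) \<le> real (Suc m choose j) * R ^ (Suc m - j)"
      using b2 by (simp add: cf 0)
    thus ?thesis by (simp only: prod)
  next
    case (Suc j')
    have "norm (coeff ([:- r m, 1:] * P) j) \<le> norm (coeff P j') + norm (r m * coeff P j)"
      by (simp add: cf Suc norm_triangle_ineq4)
    also have "\<dots> \<le> real (m choose j') * R ^ (m - j') + R * (real (m choose j) * R ^ (m - j))"
      by (intro add_mono IH b2)
    also have "\<dots> \<le> real (Suc m choose j) * R ^ (Suc m - j)"
    proof (cases "j \<le> m")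
      case True
      have e1: "R * R ^ (m - j) = R ^ (Suc m - j)" using True by (simp add: Suc_diff_le)
      have e2: "Suc m - j = m - j'" using Suc True by simp
      have "real (m choose j') * R ^ (m - j') + R * (real (m choose j) * R ^ (m - j))
            = (real (m choose j') + real (m choose j)) * R ^ (Suc m - j)"
        using e1 e2 by (simp add: algebra_simps)
      also have "real (m choose j') + real (m choose j) = real (Suc m choose j)"
        using Suc by simp
      finally show ?thesis by simp
    next
      case False
      hence "m choose j = 0" by simp
      moreover have "j' \<le> m \<longrightarrow> j' = m" using False Suc by auto
      ultimately show ?thesis using Suc False
        by (cases "j' = m") (auto simp: binomial_eq_0)
    qed
    finally have "norm (coeff ([:- r m, 1:] * P) j) \<le> real (Suc m choose j) * R ^ (Suc m - j)" .
    thus ?thesis by (simp only: prod)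
  qed
qed

lemma vieta_bound:
  fixes q :: "complex poly"
  assumes q0: "q \<noteq> 0" and R: "R \<ge> 0" and roots: "\<And>z. poly q z = 0 \<Longrightarrow> norm z \<le> R"
  shows "norm (coeff q j) \<le> norm (lead_coeff q) * real (degree q choose j) * R ^ (degree q - j)"
proof -
  obtain r where dec: "Polynomial.smult (lead_coeff q) (\<Prod>i<degree q. [:- r i, 1:]) = q"
    using complex_poly_decompose'[of q] by blast
  have rr: "norm (r i) \<le> R" if "i < degree q" for i
  proof (rule roots)
    have "poly (\<Prod>i<degree q. [:- r i, 1:]) (r i) = 0"
      using that by (auto simp: poly_prod intro!: prod_zero)
    thus "poly q (r i) = 0" by (subst dec[symmetric]) simp
  qed
  have "coeff q j = lead_coeff q * coeff (\<Prod>i<degree q. [:- r i, 1:]) j"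
    by (subst (1) dec[symmetric]) simp
  hence "norm (coeff q j) = norm (lead_coeff q) * norm (coeff (\<Prod>i<degree q. [:- r i, 1:]) j)"
    by (simp add: norm_mult)
  also have "\<dots> \<le> norm (lead_coeff q) * (real (degree q choose j) * R ^ (degree q - j))"
    by (intro mult_left_mono coeff_prod_bound rr R) auto
  finally show ?thesis by (simp add: mult_ac)
qed

lemma geom_half: "(\<Sum>i<m. (1/2::real) ^ Suc i) = 1 - (1/2)^m"
  by (induction m) (simp_all add: field_simps)

lemma root_bound:
  fixes q :: "complex poly"
  assumes hi: "\<And>i. i > m \<Longrightarrow> coeff q i = 0" and cm: "coeff q m \<noteq> 0" and B: "B \<ge> 0"
  and lo: "\<And>i. i < m \<Longrightarrow> norm (coeff q i) \<le> norm (coeff q m) * B ^ (m - i)"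
  and z: "poly q z = 0"
  shows "norm z \<le> 2 * B"
proof (rule ccontr)
  assume "\<not> norm z \<le> 2 * B"
  hence zB: "norm z > 2 * B" by simp
  hence zpos: "norm z > 0" using B by linarith
  have "poly q z = (\<Sum>i<Suc m. coeff q i * z^i)" by (rule poly_sum_lt) (use hi in auto)
  also have "\<dots> = (\<Sum>i<m. coeff q i * z^i) + coeff q m * z^m" by simp
  finally have eq: "coeff q m * z^m = - (\<Sum>i<m. coeff q i * z^i)" using z by (simp add: eq_neg_iff_add_eq_0 add.commute)
  have "norm (\<Sum>i<m. coeff q i * z^i) \<le> (\<Sum>i<m. norm (coeff q m) * norm z ^ m * (1/2) ^ (m - i))"
  proof (rule order_trans[OF norm_sum sum_mono])
    fix i assume i: "i \<in> {..<m}"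
    have "B ^ (m - i) \<le> (norm z / 2) ^ (m - i)" using zB B by (intro power_mono) auto
    hence "norm (coeff q i) \<le> norm (coeff q m) * (norm z / 2) ^ (m - i)"
    proof -
      have "i < m" using i by simp
      from order_trans[OF lo[OF this] mult_left_mono[OF \<open>B ^ (m - i) \<le> (norm z / 2) ^ (m - i)\<close> norm_ge_zero]]
      show ?thesis .
    qed
    hence "norm (coeff q i) * norm z ^ i \<le> norm (coeff q m) * (norm z / 2) ^ (m - i) * norm z ^ i"
      by (rule mult_right_mono) simp
    moreover have "norm (coeff q i * z^i) = norm (coeff q i) * norm z ^ i" by (simp add: norm_mult norm_power)
    ultimately have "norm (coeff q i * z^i) \<le> norm (coeff q m) * (norm z / 2) ^ (m - i) * norm z ^ i" by simp
    also have "\<dots> = norm (coeff q m) * norm z ^ m * (1/2) ^ (m - i)"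
    proof -
      have e1: "(norm z / 2) ^ (m - i) = norm z ^ (m - i) * (1/2) ^ (m - i)"
        using power_mult_distrib[of "norm z" "1/2" "m - i"] by simp
      have e2: "norm z ^ (m - i) * norm z ^ i = norm z ^ m"
        using i by (simp add: power_add[symmetric])
      have "(norm z / 2) ^ (m - i) * norm z ^ i = norm z ^ m * (1/2) ^ (m - i)"
        unfolding e1 e2[symmetric] by (simp only: mult_ac)
      thus ?thesis by (simp add: mult_ac)
    qed
    finally show "norm (coeff q i * z^i) \<le> norm (coeff q m) * norm z ^ m * (1/2) ^ (m - i)" .
  qed
  also have "\<dots> = norm (coeff q m) * norm z ^ m * (\<Sum>i<m. (1/2) ^ (m - i))"
    by (simp add: sum_distrib_left)
  also have "(\<Sum>i<m. (1/2::real) ^ (m - i)) < 1"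
  proof -
    have "(\<Sum>i<m. (1/2::real) ^ (m - i)) = (\<Sum>i<m. (1/2) ^ Suc i)"
      using sum.nat_diff_reindex[of "\<lambda>i. (1/2::real) ^ (m - i)" m] by (simp add: Suc_diff_le)
    also have "\<dots> = 1 - (1/2)^m" by (rule geom_half)
    finally show ?thesis by simp
  qed
  hence "norm (coeff q m) * norm z ^ m * (\<Sum>i<m. (1/2::real) ^ (m - i)) < norm (coeff q m) * norm z ^ m"
  proof -
    have "cmod (coeff q m) * cmod z ^ m > 0" using cm zpos by simp
    from mult_strict_left_mono[OF \<open>(\<Sum>i<m. (1/2::real) ^ (m - i)) < 1\<close> this] show ?thesis by simp
  qed
  finally have "norm (\<Sum>i<m. coeff q i * z^i) < norm (coeff q m * z^m)" by (simp add: norm_mult norm_power)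
  thus False using eq by simp
qed



definition Dq :: "complex poly \<Rightarrow> complex \<Rightarrow> complex \<Rightarrow> complex" where
  "Dq h z w = (\<Sum>k\<le>degree h. coeff h k * (\<Sum>j<k. z^j * w^(k-1-j)))"

definition cF :: "complex poly \<Rightarrow> nat \<Rightarrow> complex poly" where
  "cF h i = (\<Sum>k\<le>degree h. if i < k then monom (coeff h k) (k - 1 - i) else 0)"
definition cG :: "complex poly \<Rightarrow> nat \<Rightarrow> complex poly" where
  "cG h i = (\<Sum>k\<le>degree h. if degree h - 1 - i < k then monom (cnj (coeff h k)) (degree h - k + (degree h - 1 - i)) else 0)"
definition FF :: "complex poly \<Rightarrow> complex poly poly" where "FF h = Poly (map (cF h) [0..<degree h])"
definition GG :: "complex poly \<Rightarrow> complex poly poly" where "GG h = Poly (map (cG h) [0..<degree h])"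

lemma coeff_FF: "coeff (FF h) i = (if i < degree h then cF h i else 0)"
  by (simp add: FF_def nth_default_def)
lemma coeff_GG: "coeff (GG h) i = (if i < degree h then cG h i else 0)"
  by (simp add: GG_def nth_default_def)
lemma coeff_ev: "coeff (map_poly (\<lambda>p. poly p w) P) i = poly (coeff P i) (w::complex)"
  by (simp add: coeff_map_poly)

lemma poly_cF: "poly (cF h i) w = (\<Sum>k\<le>degree h. if i < k then coeff h k * w^(k-1-i) else 0)"
  unfolding cF_def poly_sum by (intro sum.cong) (auto simp: poly_monom)
lemma poly_cG: "poly (cG h i) w = (\<Sum>k\<le>degree h. if degree h - 1 - i < k then cnj (coeff h k) * w^(degree h - k + (degree h - 1 - i)) else 0)"
  unfolding cG_def poly_sum by (intro sum.cong) (auto simp: poly_monom)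

lemma sum_if_less: "(k::nat) \<le> n \<Longrightarrow> (\<Sum>i<n. if i < k then f i else 0) = (\<Sum>i<k. f i)"
proof -
  assume "k \<le> n"
  hence "{..<n} \<inter> {i. i < k} = {..<k}" by auto
  thus ?thesis by (simp add: sum.If_cases)
qed

lemma ev_FF: "poly (map_poly (\<lambda>p. poly p w) (FF h)) z = Dq h z w"
proof -
  let ?n = "degree h"
  have "poly (map_poly (\<lambda>p. poly p w) (FF h)) z = (\<Sum>i<?n. poly (cF h i) w * z^i)"
    by (subst poly_sum_lt[of ?n]) (auto simp: coeff_ev coeff_FF)
  also have "\<dots> = (\<Sum>i<?n. \<Sum>k\<le>?n. if i < k then coeff h k * (z^i * w^(k-1-i)) else 0)"
    unfolding poly_cF sum_distrib_right by (intro sum.cong refl) auto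
  also have "\<dots> = (\<Sum>k\<le>?n. \<Sum>i<?n. if i < k then coeff h k * (z^i * w^(k-1-i)) else 0)"
    by (rule sum.swap)
  also have "\<dots> = (\<Sum>k\<le>?n. \<Sum>i<k. coeff h k * (z^i * w^(k-1-i)))"
    by (intro sum.cong refl sum_if_less) auto
  also have "\<dots> = Dq h z w" by (simp add: Dq_def sum_distrib_left)
  finally show ?thesis .
qed

lemma unit_pow_cnj: "norm (z::complex) = 1 \<Longrightarrow> z^a * cnj z ^ a = 1"
proof -
  assume "norm z = 1"
  hence "z * cnj z = 1" by (simp add: complex_mult_cnj cmod_def power2_eq_square)
  thus ?thesis by (simp add: power_mult_distrib[symmetric])
qed

lemma ev_GG:
  assumes z: "norm z = 1" and w: "norm w = 1"
  shows "poly (map_poly (\<lambda>p. poly p w) (GG h)) z = (z * w)^(degree h - 1) * cnj (Dq h z w)"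
proof -
  let ?n = "degree h"
  let ?b = "\<lambda>k. cnj (coeff h k)"
  have "poly (map_poly (\<lambda>p. poly p w) (GG h)) z = (\<Sum>i<?n. poly (cG h i) w * z^i)"
    by (subst poly_sum_lt[of ?n]) (auto simp: coeff_ev coeff_GG)
  also have "\<dots> = (\<Sum>j<?n. poly (cG h (?n - Suc j)) w * z^(?n - Suc j))"
    by (rule sum.nat_diff_reindex[symmetric])
  also have "\<dots> = (\<Sum>j<?n. \<Sum>k\<le>?n. if j < k then ?b k * (w^(?n - k + j) * z^(?n - 1 - j)) else 0)"
  proof (intro sum.cong refl)
    fix j assume j: "j \<in> {..<?n}"
    have e: "?n - 1 - (?n - Suc j) = j" using j by auto
    show "poly (cG h (?n - Suc j)) w * z^(?n - Suc j) = (\<Sum>k\<le>?n. if j < k then ?b k * (w^(?n - k + j) * z^(?n - 1 - j)) else 0)"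
      unfolding poly_cG e sum_distrib_right by (intro sum.cong refl) auto
  qed
  also have "\<dots> = (\<Sum>k\<le>?n. \<Sum>j<?n. if j < k then ?b k * (w^(?n - k + j) * z^(?n - 1 - j)) else 0)"
    by (rule sum.swap)
  also have "\<dots> = (\<Sum>k\<le>?n. \<Sum>j<k. ?b k * (w^(?n - k + j) * z^(?n - 1 - j)))"
    by (intro sum.cong refl sum_if_less) auto
  also have "\<dots> = (\<Sum>k\<le>?n. \<Sum>j<k. ?b k * ((z * w)^(?n - 1) * (cnj z ^ j * cnj w ^ (k - 1 - j))))"
  proof (intro sum.cong refl)
    fix k j assume k: "k \<in> {..?n}" and j: "j \<in> {..<k}"
    have ez: "z^(?n - 1) = z^(?n - 1 - j) * z^j" using k j by (simp add: power_add[symmetric])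
    have ew: "w^(?n - 1) = w^(?n - k + j) * w^(k - 1 - j)" using k j by (simp add: power_add[symmetric])
    have "(z * w)^(?n - 1) * (cnj z ^ j * cnj w ^ (k - 1 - j))
        = ((z^(?n - 1 - j) * z^j) * (w^(?n - k + j) * w^(k - 1 - j))) * (cnj z ^ j * cnj w ^ (k - 1 - j))"
      by (simp only: power_mult_distrib ez ew)
    also have "\<dots> = (w^(?n - k + j) * z^(?n - 1 - j)) * ((z^j * cnj z ^ j) * (w^(k - 1 - j) * cnj w ^ (k - 1 - j)))"
      by (simp only: mult_ac)
    also have "\<dots> = w^(?n - k + j) * z^(?n - 1 - j)" using unit_pow_cnj[OF z] unit_pow_cnj[OF w] by simp
    finally show "?b k * (w^(?n - k + j) * z^(?n - 1 - j)) = ?b k * ((z * w)^(?n - 1) * (cnj z ^ j * cnj w ^ (k - 1 - j)))"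
      by simp
  qed
  also have "\<dots> = (z * w)^(?n - 1) * cnj (Dq h z w)"
    by (simp add: Dq_def sum_distrib_left mult_ac)
  finally show ?thesis .
qed


lemma deg_eq: "coeff q m \<noteq> 0 \<Longrightarrow> (\<And>i. i > m \<Longrightarrow> coeff q i = 0) \<Longrightarrow> degree q = m"
  by (meson antisym degree_le le_degree)

lemma cF_top:
  assumes "degree h \<ge> 1"
  shows "cF h (degree h - 1) = [:lead_coeff h:]"
proof -
  have "cF h (degree h - 1) = (\<Sum>k\<le>degree h. if k = degree h then monom (coeff h k) 0 else 0)"
    unfolding cF_def by (intro sum.cong refl) (use assms in auto)
  also have "\<dots> = [:lead_coeff h:]" by (simp add: monom_0)
  finally show ?thesis .
qed

lemma h_nz: "degree h \<ge> 1 \<Longrightarrow> h \<noteq> 0" by auto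

lemma FF_top: "degree h \<ge> 1 \<Longrightarrow> coeff (FF h) (degree h - 1) = [:lead_coeff h:]"
proof -
  assume d: "degree h \<ge> 1"
  have "degree h - 1 < degree h" using d by simp
  hence "coeff (FF h) (degree h - 1) = cF h (degree h - 1)" by (simp only: coeff_FF if_True)
  also have "\<dots> = [:lead_coeff h:]" by (rule cF_top[OF d])
  finally show ?thesis .
qed

lemma degree_FF: "degree h \<ge> 1 \<Longrightarrow> degree (FF h) = degree h - 1"
proof (rule deg_eq)
  assume d: "degree h \<ge> 1"
  show "coeff (FF h) (degree h - 1) \<noteq> 0" unfolding FF_top[OF d] using h_nz[OF d] by simp
  show "coeff (FF h) i = 0" if "i > degree h - 1" for i using that by (simp add: coeff_FF)
qed

lemma degree_ev_FF: "degree h \<ge> 1 \<Longrightarrow> degree (map_poly (\<lambda>p. poly p w) (FF h)) = degree h - 1"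
proof (rule deg_eq)
  assume d: "degree h \<ge> 1"
  show "coeff (map_poly (\<lambda>p. poly p w) (FF h)) (degree h - 1) \<noteq> 0"
    unfolding coeff_ev FF_top[OF d] using h_nz[OF d] by simp
  show "coeff (map_poly (\<lambda>p. poly p w) (FF h)) i = 0" if "i > degree h - 1" for i
    using that by (simp add: coeff_ev coeff_FF)
qed

lemma cG_top_coeff0: "degree h \<ge> 1 \<Longrightarrow> coeff (cG h (degree h - 1)) 0 = cnj (lead_coeff h)"
proof -
  assume d: "degree h \<ge> 1"
  have "coeff (cG h (degree h - 1)) 0 = (\<Sum>k\<le>degree h. if k = degree h then cnj (coeff h k) else 0)"
    unfolding cG_def coeff_sum by (intro sum.cong refl) (use d in \<open>auto simp: coeff_monom\<close>)
  thus ?thesis by simp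
qed

lemma cG_top_nz: "degree h \<ge> 1 \<Longrightarrow> cG h (degree h - 1) \<noteq> 0"
proof
  assume d: "degree h \<ge> 1" and "cG h (degree h - 1) = 0"
  hence "coeff (cG h (degree h - 1)) 0 = 0" by simp
  hence "cnj (lead_coeff h) = 0" unfolding cG_top_coeff0[OF d] .
  thus False using h_nz[OF d] by simp
qed

lemma degree_GG: "degree h \<ge> 1 \<Longrightarrow> degree (GG h) = degree h - 1"
proof (rule deg_eq)
  assume d: "degree h \<ge> 1"
  have "degree h - 1 < degree h" using d by simp
  hence "coeff (GG h) (degree h - 1) = cG h (degree h - 1)" by (simp only: coeff_GG if_True)
  thus "coeff (GG h) (degree h - 1) \<noteq> 0" using cG_top_nz[OF d] by simp
  show "coeff (GG h) i = 0" if "i > degree h - 1" for i using that by (simp add: coeff_GG)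
qed

lemma degree_ev_GG: "degree h \<ge> 1 \<Longrightarrow> poly (cG h (degree h - 1)) w \<noteq> 0 \<Longrightarrow>
    degree (map_poly (\<lambda>p. poly p w) (GG h)) = degree h - 1"
proof (rule deg_eq)
  assume d: "degree h \<ge> 1" and nz: "poly (cG h (degree h - 1)) w \<noteq> 0"
  have "degree h - 1 < degree h" using d by simp
  hence "coeff (GG h) (degree h - 1) = cG h (degree h - 1)" by (simp only: coeff_GG if_True)
  thus "coeff (map_poly (\<lambda>p. poly p w) (GG h)) (degree h - 1) \<noteq> 0" using nz by (simp add: coeff_ev)
  show "coeff (map_poly (\<lambda>p. poly p w) (GG h)) i = 0" if "i > degree h - 1" for i
    using that by (simp add: coeff_ev coeff_GG)
qed

definition Ah :: "complex poly \<Rightarrow> real" where "Ah h = (\<Sum>k\<le>degree h. norm (coeff h k))"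

lemma bF:
  assumes i: "i < degree h"
  shows "norm (poly (cF h i) w) \<le> Ah h * max 1 (norm w) ^ (degree h - 1 - i)"
proof -
  let ?M = "max 1 (norm w)"
  have "norm (poly (cF h i) w) \<le> (\<Sum>k\<le>degree h. norm (if i < k then coeff h k * w^(k-1-i) else 0))"
    unfolding poly_cF by (rule norm_sum)
  also have "\<dots> \<le> (\<Sum>k\<le>degree h. norm (coeff h k) * ?M ^ (degree h - 1 - i))"
  proof (rule sum_mono)
    fix k assume k: "k \<in> {..degree h}"
    show "norm (if i < k then coeff h k * w^(k-1-i) else 0) \<le> norm (coeff h k) * ?M ^ (degree h - 1 - i)"
    proof (cases "i < k")
      case True
      have "norm w ^ (k-1-i) \<le> ?M ^ (k-1-i)" by (intro power_mono) auto
      also have "\<dots> \<le> ?M ^ (degree h - 1 - i)" using k by (intro power_increasing) auto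
      finally show ?thesis using True by (simp add: norm_mult norm_power mult_left_mono)
    qed auto
  qed
  also have "\<dots> = Ah h * ?M ^ (degree h - 1 - i)" by (simp add: Ah_def sum_distrib_right)
  finally show ?thesis .
qed

lemma bG:
  assumes i: "i < degree h" and w: "norm w \<le> 1"
  shows "norm (poly (cG h i) w) \<le> Ah h * norm w ^ (degree h - 1 - i)"
proof -
  let ?n = "degree h"
  have "norm (poly (cG h i) w) \<le> (\<Sum>k\<le>?n. norm (if ?n - 1 - i < k then cnj (coeff h k) * w^(?n - k + (?n - 1 - i)) else 0))"
    unfolding poly_cG by (rule norm_sum)
  also have "\<dots> \<le> (\<Sum>k\<le>?n. norm (coeff h k) * norm w ^ (?n - 1 - i))"
  proof (rule sum_mono)
    fix k assume k: "k \<in> {..?n}"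
    show "norm (if ?n - 1 - i < k then cnj (coeff h k) * w^(?n - k + (?n - 1 - i)) else 0) \<le> norm (coeff h k) * norm w ^ (?n - 1 - i)"
    proof (cases "?n - 1 - i < k")
      case True
      have "norm w ^ (?n - k + (?n - 1 - i)) \<le> norm w ^ (?n - 1 - i)" using w by (intro power_decreasing) auto
      thus ?thesis using True by (simp add: norm_mult norm_power mult_left_mono)
    qed auto
  qed
  also have "\<dots> = Ah h * norm w ^ (?n - 1 - i)" by (simp add: Ah_def sum_distrib_right)
  finally show ?thesis .
qed

lemma bGtop:
  assumes d: "degree h \<ge> 1" and w: "norm w \<le> 1"
  shows "norm (poly (cG h (degree h - 1)) w - cnj (lead_coeff h)) \<le> Ah h * norm w"
proof -
  let ?n = "degree h"
  define f where "f = (\<lambda>k. if 0 < k then cnj (coeff h k) * w^(?n - k) else 0)"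
  have "poly (cG h (?n - 1)) w = (\<Sum>k\<le>?n. f k)"
    unfolding poly_cG f_def by (intro sum.cong refl) auto
  also have "\<dots> = (\<Sum>k<?n. f k) + f ?n" by (simp add: lessThan_Suc_atMost[symmetric])
  also have "f ?n = cnj (lead_coeff h)" using d by (simp add: f_def)
  finally have e: "poly (cG h (?n - 1)) w - cnj (lead_coeff h) = (\<Sum>k<?n. f k)" by simp
  have "norm (\<Sum>k<?n. f k) \<le> (\<Sum>k<?n. norm (f k))" by (rule norm_sum)
  also have "\<dots> \<le> (\<Sum>k<?n. norm (coeff h k) * norm w)"
  proof (rule sum_mono)
    fix k assume k: "k \<in> {..<?n}"
    show "norm (f k) \<le> norm (coeff h k) * norm w"
    proof (cases "0 < k")
      case True
      have "norm w ^ (?n - k) \<le> norm w ^ 1" using w k by (intro power_decreasing) auto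
      thus ?thesis using True by (simp add: f_def norm_mult norm_power mult_left_mono)
    qed (auto simp: f_def)
  qed
  also have "\<dots> \<le> (\<Sum>k\<le>?n. norm (coeff h k) * norm w)"
    by (rule sum_mono2) auto
  also have "\<dots> = Ah h * norm w" by (simp add: Ah_def sum_distrib_right)
  finally show ?thesis using e by simp
qed



lemma Dq_diff: "(z - w) * Dq h z w = poly h z - poly h w"
proof -
  have "poly h z - poly h w = (\<Sum>k\<le>degree h. coeff h k * (z^k - w^k))"
    by (simp add: poly_altdef sum_subtractf right_diff_distrib)
  also have "\<dots> = (\<Sum>k\<le>degree h. coeff h k * ((z - w) * (\<Sum>j<k. w^(k - Suc j) * z^j)))"
    by (simp add: power_diff_sumr2)
  also have "\<dots> = (z - w) * Dq h z w"
    unfolding Dq_def by (simp add: sum_distrib_left mult_ac)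
  finally show ?thesis by simp
qed

lemma Dq_isCont: "isCont (\<lambda>z. Dq h z w) x"
  unfolding Dq_def by (intro continuous_intros)

lemma Dq_diag: "Dq h w w = poly (pderiv h) w"
proof -
  have "(poly h has_field_derivative Dq h w w) (at w)"
    unfolding CARAT_DERIV
    by (rule exI[of _ "\<lambda>z. Dq h z w"]) (auto simp: Dq_isCont Dq_diff[symmetric] mult.commute)
  moreover have "(poly h has_field_derivative poly (pderiv h) w) (at w)"
    by (rule poly_DERIV)
  ultimately show ?thesis by (rule DERIV_unique)
qed

lemma sym_from_root:
  fixes h :: "complex poly"
  assumes deg: "degree h \<ge> 1" and Z: "\<And>w. Dq h (\<zeta> * w) w = 0"
  shows "\<exists>m::nat. m > 1 \<and> (\<exists>g :: complex poly. h = pcompose g (monom 1 m))"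
proof -
  define n where "n = degree h"
  have z1: "\<zeta> \<noteq> 1"
  proof
    assume "\<zeta> = 1"
    hence "poly (pderiv h) w = 0" for w using Z[of w] by (simp add: Dq_diag)
    hence "pderiv h = 0" using poly_all_0_iff_0 by blast
    thus False using deg by (simp add: pderiv_eq_0_iff)
  qed
  have hz: "poly h (\<zeta> * w) = poly h w" for w
  proof (cases "w = 0")
    case True thus ?thesis by simp
  next
    case False
    have "(\<zeta> * w - w) * Dq h (\<zeta> * w) w = poly h (\<zeta> * w) - poly h w" by (rule Dq_diff)
    thus ?thesis using Z[of w] by simp
  qed
  have "pcompose h [:0, \<zeta>:] = h"
  proof (rule poly_eq_poly_eq_iff[THEN iffD1], rule ext)
    fix w show "poly (pcompose h [:0, \<zeta>:]) w = poly h w"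
      using hz[of w] by (simp add: poly_pcompose mult.commute)
  qed
  hence ck: "\<zeta>^k * coeff h k = coeff h k" for k
    using coeff_pcompose_linear[of h \<zeta> k] by simp
  have hnz: "h \<noteq> 0" using deg by auto
  have zn: "\<zeta>^n = 1" using ck[of n] hnz by (simp add: n_def)
  have npos: "n > 0" using deg by (simp add: n_def)
  define m where "m = (LEAST m. 0 < m \<and> \<zeta>^m = 1)"
  have mex: "0 < m \<and> \<zeta>^m = 1" unfolding m_def by (rule LeastI[of _ n]) (use zn npos in auto)
  have m1: "m > 1" using mex z1 by (cases "m = 1") auto
  have mdvd: "m dvd k" if "coeff h k \<noteq> 0" for k
  proof -
    have zk: "\<zeta>^k = 1" using ck[of k] that by simp
    have "\<zeta>^k = (\<zeta>^m)^(k div m) * \<zeta>^(k mod m)"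
      by (simp add: power_mult[symmetric] power_add[symmetric])
    hence r: "\<zeta>^(k mod m) = 1" using zk mex by simp
    show ?thesis
    proof (rule ccontr)
      assume "\<not> m dvd k"
      hence "0 < k mod m" by (simp add: mod_greater_zero_iff_not_dvd)
      moreover have "k mod m < m" using mex by simp
      ultimately show False using r not_less_Least[of "k mod m" "\<lambda>m. 0 < m \<and> \<zeta>^m = 1"] unfolding m_def by auto
    qed
  qed
  define g where "g = Poly (map (\<lambda>j. coeff h (m * j)) [0..<Suc n])"
  have cg: "coeff g j = coeff h (m * j)" for j
  proof (cases "j < Suc n")
    case True thus ?thesis by (simp add: g_def nth_default_def del: upt_Suc)
  next
    case False
    have "j \<le> m * j" using mex by simp
    hence "m * j > n" using False by linarith
    thus ?thesis using False by (simp add: g_def nth_default_def n_def coeff_eq_0 del: upt_Suc)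
  qed
  have "h = pcompose g (monom 1 m)"
  proof (rule poly_eqI)
    fix t
    have t: "t = m * (t div m) + t mod m" by simp
    have cm: "coeff (pcompose g (monom 1 m)) t = (if t mod m = 0 then coeff g (t div m) else 0)"
      by (subst t) (rule coeff_pcompose_monom, use mex in simp)
    show "coeff h t = coeff (pcompose g (monom 1 m)) t"
    proof (cases "t mod m = 0")
      case True
      hence e: "m * (t div m) = t" using div_mult_mod_eq[of t m] by (simp add: mult.commute)
      have "coeff (pcompose g (monom 1 m)) t = coeff g (t div m)" using cm True by simp
      also have "\<dots> = coeff h t" using cg[of "t div m"] e by simp
      finally show ?thesis by simp
    next
      case False
      hence "coeff h t = 0" using mdvd by (meson dvd_eq_mod_eq_0)
      thus ?thesis using cm False by simp
    qed
  qed
  thus ?thesis using m1 by blast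
qed


lemma deg_pos:
  fixes h :: "complex poly"
  assumes "\<not> (\<exists>m::nat. m > 1 \<and> (\<exists>g :: complex poly. h = pcompose g (monom 1 m)))"
  shows "degree h \<ge> 1"
proof (rule ccontr)
  assume "\<not> degree h \<ge> 1"
  hence "degree h = 0" by simp
  then obtain a where "h = [:a:]" by (meson degree_eq_zeroE)
  hence "h = pcompose h (monom 1 2)" by simp
  thus False using assms by force
qed

lemma ev_mult: "map_poly (\<lambda>p. poly p (a::complex)) (P * Q) = map_poly (\<lambda>p. poly p a) P * map_poly (\<lambda>p. poly p a) Q"
proof -
  interpret m: map_poly_comm_ring_hom "\<lambda>p. poly p a" ..
  show ?thesis by (rule m.hom_mult)
qed

lemma twins_finite:
  fixes h :: "complex poly"
  assumes asm: "\<not> (\<exists>m::nat. m > 1 \<and> (\<exists>g :: complex poly. h = pcompose g (monom 1 m)))"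
  shows "finite {w. norm w = 1 \<and> (\<exists>z. norm z = 1 \<and> z \<noteq> w \<and> poly h z = poly h w)}" (is "finite ?T")
proof (rule ccontr)
  assume inf: "infinite ?T"
  have d: "degree h \<ge> 1" by (rule deg_pos[OF asm])
  define n where "n = degree h"
  define ev where "ev = (\<lambda>(w::complex) (P::complex poly poly). map_poly (\<lambda>p. poly p w) P)"
  define gt where "gt = cG h (n - 1)"
  have gtnz: "gt \<noteq> 0" using cG_top_nz[OF d] by (simp add: gt_def n_def)
  have hnz: "h \<noteq> 0" using d by auto
  have lnz: "lead_coeff h \<noteq> 0" using hnz by simp
  have FFnz: "ev w (FF h) \<noteq> 0" for w
  proof
    assume "ev w (FF h) = 0"
    hence "coeff (ev w (FF h)) (n - 1) = 0" by simp
    thus False unfolding ev_def coeff_ev n_def FF_top[OF d] using lnz by simp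
  qed
  have R0: "resultant (FF h) (GG h) = 0"
  proof (rule ccontr)
    assume Rnz: "resultant (FF h) (GG h) \<noteq> 0"
    have "?T \<subseteq> {w. poly gt w = 0} \<union> {w. poly (resultant (FF h) (GG h)) w = 0}"
    proof
      fix w assume wT: "w \<in> ?T"
      show "w \<in> {w. poly gt w = 0} \<union> {w. poly (resultant (FF h) (GG h)) w = 0}"
      proof (cases "poly gt w = 0")
        case True thus ?thesis by simp
      next
        case False
        from wT obtain z where z: "norm z = 1" "z \<noteq> w" "poly h z = poly h w" and w1: "norm w = 1" by auto
        have D0: "Dq h z w = 0" using Dq_diff[of z w h] z by simp
        let ?f = "map_poly (\<lambda>p. poly p w) (FF h)"
        let ?g = "map_poly (\<lambda>p. poly p w) (GG h)"
        have rF: "poly ?f z = 0" by (simp add: ev_FF D0)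
        have rG: "poly ?g z = 0" by (simp add: ev_GG[OF z(1) w1] D0)
        have dF: "degree ?f = degree (FF h)" using degree_ev_FF[OF d] degree_FF[OF d] by simp
        have dG: "degree ?g = degree (GG h)" using degree_ev_GG[OF d, of w] degree_GG[OF d] False
          by (simp add: gt_def n_def)
        have "poly (resultant (FF h) (GG h)) w = resultant ?f ?g"
          by (rule poly_hom.resultant_map_poly[OF dF dG, symmetric])
        also have "\<dots> = 0"
        proof -
          have "[:-z,1:] dvd ?f" "[:-z,1:] dvd ?g" using rF rG poly_eq_0_iff_dvd by blast+
          hence dv: "[:-z,1:] dvd gcd ?f ?g" by simp
          have "?f \<noteq> 0" using FFnz[of w] by (simp add: ev_def)
          hence "gcd ?f ?g \<noteq> 0" by simp
          hence "degree [:-z,1:] \<le> degree (gcd ?f ?g)" using dv by (intro dvd_imp_degree_le)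
          hence "degree (gcd ?f ?g) \<noteq> 0" by simp
          thus ?thesis using resultant_0_gcd by blast
        qed
        finally show ?thesis by simp
      qed
    qed
    moreover have "finite ({w. poly gt w = 0} \<union> {w. poly (resultant (FF h) (GG h)) w = 0})"
      using poly_roots_finite[OF gtnz] poly_roots_finite[OF Rnz] by simp
    ultimately show False using inf finite_subset by blast
  qed
  define P where "P = gcd (FF h) (GG h)"
  have dP: "degree P \<noteq> 0" using R0 resultant_0_gcd unfolding P_def by blast
  obtain Rf where FRf: "FF h = P * Rf" unfolding P_def by (meson gcd_dvd1 dvdE)
  obtain Rg where GRg: "GG h = P * Rg" unfolding P_def by (meson gcd_dvd2 dvdE)
  have FF0: "FF h \<noteq> 0" using FFnz[of 0] by (auto simp: ev_def)
  have P0: "P \<noteq> 0" and Rf0: "Rf \<noteq> 0" using FF0 FRf by auto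
  have "lead_coeff (FF h) = [:lead_coeff h:]" using FF_top[OF d] degree_FF[OF d] by simp
  hence lc: "[:lead_coeff h:] = lead_coeff P * lead_coeff Rf" by (simp add: FRf lead_coeff_mult)
  have "degree (lead_coeff P * lead_coeff Rf) = degree (lead_coeff P) + degree (lead_coeff Rf)"
    using P0 Rf0 by (intro degree_mult_eq) auto
  hence "degree (lead_coeff P) = 0" using lc[symmetric] by simp
  then obtain c where c: "lead_coeff P = [:c:]" by (meson degree_eq_zeroE)
  have c0: "c \<noteq> 0" using c P0 by auto
  define dd where "dd = degree P"
  have dd1: "dd \<ge> 1" using dP by (simp add: dd_def)
  have evP_coeff: "coeff (ev w P) i = poly (coeff P i) w" for w i by (simp add: ev_def coeff_ev)
  have evP_deg: "degree (ev w P) = dd" for w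
  proof (rule deg_eq)
    show "coeff (ev w P) dd \<noteq> 0" using c c0 by (simp add: evP_coeff dd_def)
    show "coeff (ev w P) i = 0" if "i > dd" for i using that by (simp add: evP_coeff dd_def coeff_eq_0)
  qed
  have evP_lead: "lead_coeff (ev w P) = c" for w using c by (simp add: evP_deg evP_coeff dd_def)
  have evP_nz: "ev w P \<noteq> 0" for w using evP_lead[of w] c0 by auto
  have rootsF: "poly (ev w (FF h)) z = 0" if "poly (ev w P) z = 0" for w z
    using that by (simp add: ev_def FRf ev_mult)
  have rootsG: "poly (ev w (GG h)) z = 0" if "poly (ev w P) z = 0" for w z
    using that by (simp add: ev_def GRg ev_mult)
  have A_ge: "Ah h \<ge> norm (lead_coeff h)"
    unfolding Ah_def by (rule member_le_sum) auto
  have A0: "Ah h > 0" using A_ge lnz by (metis order.strict_trans2 zero_less_norm_iff)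
  have n1: "n \<ge> 1" using d by (simp add: n_def)
  have cFF: "coeff (ev w (FF h)) i = (if i < n then poly (cF h i) w else 0)" for w i
    by (simp add: ev_def coeff_ev coeff_FF n_def)
  have cGG: "coeff (ev w (GG h)) i = (if i < n then poly (cG h i) w else 0)" for w i
    by (simp add: ev_def coeff_ev coeff_GG n_def)
  have FFtop: "coeff (ev w (FF h)) (n - 1) = lead_coeff h" for w
    unfolding ev_def coeff_ev n_def FF_top[OF d] by simp
  define L where "L = max 1 (Ah h / norm (lead_coeff h))"
  have L1: "L \<ge> 1" by (simp add: L_def)
  have LA: "norm (lead_coeff h) * L \<ge> Ah h"
  proof -
    have "Ah h / norm (lead_coeff h) \<le> L" by (simp add: L_def)
    thus ?thesis using lnz by (simp add: field_simps)
  qed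
  have large: "norm z \<le> 2 * (L * norm w)" if w: "norm w \<ge> 1" and r: "poly (ev w (FF h)) z = 0" for w z
  proof (rule root_bound[of "n - 1" "ev w (FF h)"])
    show "coeff (ev w (FF h)) i = 0" if "i > n - 1" for i using that by (simp add: cFF)
    show "coeff (ev w (FF h)) (n - 1) \<noteq> 0" unfolding FFtop using lnz .
    show "0 \<le> L * norm w" using L1 by simp
    show "poly (ev w (FF h)) z = 0" by (rule r)
    fix i assume i: "i < n - 1"
    hence "coeff (ev w (FF h)) i = poly (cF h i) w" by (simp add: cFF)
    hence "norm (coeff (ev w (FF h)) i) \<le> Ah h * max 1 (norm w) ^ (n - 1 - i)"
      using bF[of i h w] i by (simp add: n_def)
    also have "\<dots> = Ah h * norm w ^ (n - 1 - i)" using w by (simp add: max_def)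
    also have "\<dots> \<le> (norm (lead_coeff h) * L ^ (n - 1 - i)) * norm w ^ (n - 1 - i)"
    proof (rule mult_right_mono)
      have "L ^ 1 \<le> L ^ (n - 1 - i)" using L1 i by (intro power_increasing) auto
      hence "norm (lead_coeff h) * L \<le> norm (lead_coeff h) * L ^ (n - 1 - i)" by (simp add: mult_left_mono)
      thus "Ah h \<le> norm (lead_coeff h) * L ^ (n - 1 - i)" using LA by linarith
    qed simp
    also have "\<dots> = norm (coeff (ev w (FF h)) (n - 1)) * (L * norm w) ^ (n - 1 - i)"
      unfolding FFtop by (simp add: power_mult_distrib mult_ac)
    finally show "norm (coeff (ev w (FF h)) i) \<le> norm (coeff (ev w (FF h)) (n - 1)) * (L * norm w) ^ (n - 1 - i)" .
  qed
  define \<delta> where "\<delta> = min 1 (norm (lead_coeff h) / (2 * Ah h))"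
  define L2 where "L2 = 2 * Ah h / norm (lead_coeff h)"
  have \<delta>0: "\<delta> > 0" using lnz A0 by (simp add: \<delta>_def)
  have \<delta>1: "\<delta> \<le> 1" by (simp add: \<delta>_def)
  have A\<delta>: "Ah h * \<delta> \<le> norm (lead_coeff h) / 2"
  proof -
    have "\<delta> \<le> norm (lead_coeff h) / (2 * Ah h)" by (simp add: \<delta>_def)
    hence "\<delta> * (2 * Ah h) \<le> norm (lead_coeff h)" using A0 by (simp add: le_divide_eq)
    thus ?thesis by (simp add: algebra_simps)
  qed
  have L21: "L2 \<ge> 1" using A_ge lnz A0 by (simp add: L2_def field_simps)
  have L2A: "norm (lead_coeff h) / 2 * L2 = Ah h" using lnz by (simp add: L2_def)
  have small: "norm z \<le> 2 * (L2 * norm w)" if w: "norm w \<le> \<delta>" and r: "poly (ev w (GG h)) z = 0" for w z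
  proof -
    have w1: "norm w \<le> 1" using w \<delta>1 by simp
    define t where "t = poly (cG h (n - 1)) w"
    have "norm (t - cnj (lead_coeff h)) \<le> Ah h * norm w" unfolding t_def n_def by (rule bGtop[OF d w1])
    moreover have "Ah h * norm w \<le> Ah h * \<delta>" using w A0 by (simp add: mult_left_mono)
    moreover have "norm (cnj (lead_coeff h)) \<le> norm t + norm (t - cnj (lead_coeff h))"
      using norm_triangle_ineq4[of t "t - cnj (lead_coeff h)"] by simp
    ultimately have tb: "norm t \<ge> norm (lead_coeff h) / 2" using A\<delta> by simp
    have "n - 1 < n" using n1 by simp
    hence ct: "coeff (ev w (GG h)) (n - 1) = t" unfolding cGG t_def by (simp only: if_True)
    show ?thesis
    proof (rule root_bound[of "n - 1" "ev w (GG h)"])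
      show "coeff (ev w (GG h)) i = 0" if "i > n - 1" for i using that by (simp add: cGG)
      show "coeff (ev w (GG h)) (n - 1) \<noteq> 0" unfolding ct using tb lnz by auto
      show "0 \<le> L2 * norm w" using L21 by simp
      show "poly (ev w (GG h)) z = 0" by (rule r)
      fix i assume i: "i < n - 1"
      hence "coeff (ev w (GG h)) i = poly (cG h i) w" by (simp add: cGG)
      hence "norm (coeff (ev w (GG h)) i) \<le> Ah h * norm w ^ (n - 1 - i)"
        using bG[of i h w] i w1 by (simp add: n_def)
      also have "\<dots> \<le> (norm t * L2 ^ (n - 1 - i)) * norm w ^ (n - 1 - i)"
      proof (rule mult_right_mono)
        have "L2 ^ 1 \<le> L2 ^ (n - 1 - i)" using L21 i by (intro power_increasing) auto
        hence "norm t * L2 \<le> norm t * L2 ^ (n - 1 - i)" by (simp add: mult_left_mono)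
        moreover have "norm (lead_coeff h) / 2 * L2 \<le> norm t * L2" using tb L21 by (simp add: mult_right_mono)
        ultimately show "Ah h \<le> norm t * L2 ^ (n - 1 - i)" using L2A by linarith
      qed simp
      also have "\<dots> = norm (coeff (ev w (GG h)) (n - 1)) * (L2 * norm w) ^ (n - 1 - i)"
        unfolding ct by (simp add: power_mult_distrib mult_ac)
      finally show "norm (coeff (ev w (GG h)) i) \<le> norm (coeff (ev w (GG h)) (n - 1)) * (L2 * norm w) ^ (n - 1 - i)" .
    qed
  qed
  have Pbound: "norm (poly (coeff P i) w) \<le> (norm c * real (dd choose i) * K ^ (dd - i)) * norm w ^ (dd - i)"
    if K: "K \<ge> 0" and roots: "\<And>z. poly (ev w P) z = 0 \<Longrightarrow> norm z \<le> K * norm w" for i w K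
  proof -
    have "norm (coeff (ev w P) i) \<le> norm (lead_coeff (ev w P)) * real (degree (ev w P) choose i) * (K * norm w) ^ (degree (ev w P) - i)"
      by (rule vieta_bound[OF evP_nz]) (use K roots in auto)
    moreover have "poly (coeff P dd) w = c" using c by (simp add: dd_def)
    ultimately show ?thesis unfolding evP_deg evP_coeff by (simp add: power_mult_distrib mult_ac)
  qed
  have Pmon: "coeff P i = monom (coeff (coeff P i) (dd - i)) (dd - i)" if "i \<le> dd" for i
  proof -
    have deg: "degree (coeff P i) \<le> dd - i"
    proof (rule GL2)
      fix w :: complex assume w: "norm w \<ge> 1"
      show "norm (poly (coeff P i) w) \<le> (norm c * real (dd choose i) * (2 * L) ^ (dd - i)) * norm w ^ (dd - i)"
      proof (rule Pbound)
        show "0 \<le> 2 * L" using L1 by simp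
        fix z assume "poly (ev w P) z = 0"
        hence "poly (ev w (FF h)) z = 0" by (rule rootsF)
        from large[OF w this] show "norm z \<le> 2 * L * norm w" by (simp add: mult.assoc)
      qed
    qed
    have low: "\<forall>j < dd - i. coeff (coeff P i) j = 0"
    proof (rule GL1[OF \<delta>0 \<delta>1])
      fix w :: complex assume w: "w \<noteq> 0" "norm w \<le> \<delta>"
      show "norm (poly (coeff P i) w) \<le> (norm c * real (dd choose i) * (2 * L2) ^ (dd - i)) * norm w ^ (dd - i)"
      proof (rule Pbound)
        show "0 \<le> 2 * L2" using L21 by simp
        fix z assume "poly (ev w P) z = 0"
        hence "poly (ev w (GG h)) z = 0" by (rule rootsG)
        from small[OF w(2) this] show "norm z \<le> 2 * L2 * norm w" by (simp add: mult.assoc)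
      qed
    qed
    show ?thesis
    proof (rule poly_eqI)
      fix t show "coeff (coeff P i) t = coeff (monom (coeff (coeff P i) (dd - i)) (dd - i)) t"
        using low deg coeff_eq_0[of "coeff P i" t] by (cases "t < dd - i") (auto simp: coeff_monom)
    qed
  qed
  define qq where "qq = ev 1 P"
  have degqq: "degree qq = dd" by (simp add: qq_def evP_deg)
  obtain \<zeta> where \<zeta>: "poly qq \<zeta> = 0"
    using fundamental_theorem_of_algebra[of qq] constant_degree[of qq] degqq dd1 by auto
  have Pev: "poly (coeff P i) x = coeff (coeff P i) (dd - i) * x^(dd - i)" if "i \<le> dd" for i x
    by (subst Pmon[OF that]) (simp add: poly_monom)
  have cqq: "coeff qq i = coeff (coeff P i) (dd - i)" if "i \<le> dd" for i
    using Pev[OF that, of 1] by (simp add: qq_def evP_coeff)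
  have eval: "poly (ev w P) (\<zeta> * w) = w^dd * poly qq \<zeta>" for w
  proof -
    have "poly (ev w P) (\<zeta> * w) = (\<Sum>i\<le>dd. coeff (ev w P) i * (\<zeta> * w)^i)"
      by (simp add: poly_altdef evP_deg)
    also have "\<dots> = (\<Sum>i\<le>dd. w^dd * (coeff qq i * \<zeta>^i))"
    proof (intro sum.cong refl)
      fix i assume i: "i \<in> {..dd}"
      have "coeff (ev w P) i = coeff (coeff P i) (dd - i) * w^(dd - i)"
        using Pev[of i w] i by (simp add: evP_coeff)
      moreover have "w^(dd - i) * w^i = w^dd" using i by (simp add: power_add[symmetric])
      ultimately show "coeff (ev w P) i * (\<zeta> * w)^i = w^dd * (coeff qq i * \<zeta>^i)"
        using cqq[of i] i by (simp add: power_mult_distrib mult_ac)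
    qed
    also have "\<dots> = w^dd * poly qq \<zeta>" by (simp add: poly_altdef degqq sum_distrib_left)
    finally show ?thesis .
  qed
  have "Dq h (\<zeta> * w) w = 0" for w
  proof -
    have "poly (ev w P) (\<zeta> * w) = 0" using eval \<zeta> by simp
    hence "poly (ev w (FF h)) (\<zeta> * w) = 0" by (rule rootsF)
    thus ?thesis by (simp add: ev_def ev_FF)
  qed
  from sym_from_root[OF d this] asm show False by blast
qed



lemma Dq_cont: "continuous_on UNIV (\<lambda>x. Dq h (fst x) (snd x))"
  unfolding Dq_def by (intro continuous_intros)

lemma diff_quot_Dq: "diff_quot h z w = Dq h z w"
proof (cases "z = w")
  case True thus ?thesis by (simp add: diff_quot_def Dq_diag)
next
  case False
  hence "Dq h z w = (poly h z - poly h w) / (z - w)"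
    using Dq_diff[of z w h] by (simp add: field_simps)
  thus ?thesis using False by (simp add: diff_quot_def)
qed


lemma AL:
  fixes B :: complex
  assumes B: "B \<noteq> 0" and k: "k \<ge> 1" and H: "\<forall>\<zeta>. Re \<zeta> > 0 \<longrightarrow> Re (B * \<zeta>^k) \<le> 0"
  shows "k = 1 \<and> Im B = 0 \<and> Re B < 0"
proof (cases "k = 1")
  case True
  have r: "Re B \<le> 0" using H[rule_format, of 1] True by simp
  have i: "Im B = 0"
  proof (rule ccontr)
    assume ne: "Im B \<noteq> 0"
    define s where "s = (Re B - 1) / Im B"
    have "Re (B * (1 + \<i> * of_real s)) \<le> 0" using H[rule_format, of "1 + \<i> * of_real s"] True by simp
    moreover have "Re (B * (1 + \<i> * of_real s)) = Re B - Im B * s" by simp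
    moreover have "Im B * s = Re B - 1" using ne by (simp add: s_def)
    ultimately show False by simp
  qed
  have "Re B \<noteq> 0" using B i complex_eq_iff by auto
  with r i True show ?thesis by simp
next
  case False
  hence k2: "k \<ge> 2" using k by simp
  show ?thesis
  proof (cases "Arg B = pi")
    case True
    have "sgn B = cis pi" using cis_Arg[OF B] True by simp
    hence "sgn B = -1" by simp
    hence Bv: "B = - of_real (cmod B)" using B by (metis mult_minus1_right sgn_eq of_real_eq_0_iff norm_eq_zero divide_eq_minus_1_iff)
    show ?thesis
    proof (cases "k = 2")
      case True
      have "Re (B * (1 + 2*\<i>)^k) \<le> 0" using H[rule_format, of "1 + 2*\<i>"] by simp
      moreover have "(1 + 2*\<i>)^k = -3 + 4 * \<i>" using True by (simp add: power2_eq_square algebra_simps)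
      ultimately have "Re (B * (-3 + 4*\<i>)) \<le> 0" by simp
      hence "3 * cmod B \<le> 0" by (subst (asm) Bv) simp
      thus ?thesis using B by simp
    next
      case False
      hence k3: "k \<ge> 3" using k2 by simp
      define \<zeta> where "\<zeta> = cis (- Arg B / real k)"
      have "\<bar>Arg B / real k\<bar> < pi/2"
      proof -
        have "\<bar>Arg B\<bar> \<le> pi" using Arg_bounded[of B] by auto
        hence "\<bar>Arg B\<bar> / real k \<le> pi / 3" using k3 pi_gt_zero by (intro frac_le) auto
        also have "\<dots> < pi/2" using pi_gt_zero by simp
        finally show ?thesis by (simp add: abs_divide)
      qed
      hence "- (pi/2) < - (Arg B / real k) \<and> - (Arg B / real k) < pi/2" using abs_less_iff[of "Arg B / real k" "pi/2"] by linarith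
      hence "0 < cos (- (Arg B / real k))" by (intro cos_gt_zero_pi) auto
      hence "Re \<zeta> > 0" unfolding \<zeta>_def by simp
      moreover have "B * \<zeta>^k = of_real (cmod B)"
      proof -
        have "\<zeta>^k = cis (- Arg B)" using k unfolding \<zeta>_def by (simp add: Complex.DeMoivre)
        moreover have "B = of_real (cmod B) * cis (Arg B)" using rcis_cmod_Arg[of B] by (simp add: rcis_def)
        ultimately have "B * \<zeta>^k = of_real (cmod B) * (cis (Arg B) * cis (- Arg B))" by (metis mult.assoc)
        thus ?thesis by (simp add: cis_mult)
      qed
      ultimately have "cmod B \<le> 0"
      proof -
        assume a: "Re \<zeta> > 0" and e: "B * \<zeta>^k = of_real (cmod B)"
        have "Re (B * \<zeta>^k) \<le> 0" using H a by blast
        thus ?thesis using e by simp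
      qed
      thus ?thesis using B by simp
    qed
  next
    case False
    define \<zeta> where "\<zeta> = cis (- Arg B / real k)"
    have "\<bar>Arg B / real k\<bar> < pi/2"
    proof -
      have "\<bar>Arg B\<bar> < pi" using Arg_bounded[of B] False by auto
      hence "\<bar>Arg B\<bar> / real k < pi / 2" using k2 pi_gt_zero
        proof - have "real k \<ge> 2" using k2 by simp
        hence "\<bar>Arg B\<bar> / real k \<le> \<bar>Arg B\<bar> / 2" by (intro divide_left_mono) auto
        thus ?thesis using \<open>\<bar>Arg B\<bar> < pi\<close> by linarith qed
      thus ?thesis by (simp add: abs_divide)
    qed
    hence "- (pi/2) < - (Arg B / real k) \<and> - (Arg B / real k) < pi/2" using abs_less_iff[of "Arg B / real k" "pi/2"] by linarith
    hence "0 < cos (- (Arg B / real k))" by (intro cos_gt_zero_pi) auto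
    hence "Re \<zeta> > 0" unfolding \<zeta>_def by simp
    moreover have "B * \<zeta>^k = of_real (cmod B)"
    proof -
      have "\<zeta>^k = cis (- Arg B)" using k unfolding \<zeta>_def by (simp add: Complex.DeMoivre)
      moreover have "B = of_real (cmod B) * cis (Arg B)" using rcis_cmod_Arg[of B] by (simp add: rcis_def)
      ultimately have "B * \<zeta>^k = of_real (cmod B) * (cis (Arg B) * cis (- Arg B))" by (metis mult.assoc)
        thus ?thesis by (simp add: cis_mult)
    qed
    ultimately have "cmod B \<le> 0"
      proof -
        assume a: "Re \<zeta> > 0" and e: "B * \<zeta>^k = of_real (cmod B)"
        have "Re (B * \<zeta>^k) \<le> 0" using H a by blast
        thus ?thesis using e by simp
      qed
    thus ?thesis using B by simp
  qed
qed


lemma aux_pos_le: "0 < a \<Longrightarrow> a * x \<le> 0 \<Longrightarrow> x \<le> (0::real)"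
  by (simp add: mult_le_0_iff)

lemma key_dir:
  fixes p q :: "complex poly" and c u :: complex
  assumes pq: "\<And>t. poly p t = t^k * poly q t"
  and rho: "\<rho> > 0" and H: "\<And>r. 0 < r \<Longrightarrow> r < \<rho> \<Longrightarrow> Re (c * poly p (of_real r * u)) \<le> 0"
  shows "Re (c * u^k * poly q 0) \<le> 0"
proof -
  have lim: "((\<lambda>r. Re (c * u^k * poly q (of_real r * u))) \<longlongrightarrow> Re (c * u^k * poly q (of_real 0 * u))) (at_right 0)"
    by (intro tendsto_intros isCont_tendsto_compose[of _ "poly q"]) (auto intro: continuous_intros)
  have ev: "eventually (\<lambda>r. Re (c * u^k * poly q (of_real r * u)) \<le> 0) (at_right (0::real))"
    unfolding eventually_at_right_field
  proof (intro exI[of _ \<rho>] conjI allI impI)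
    fix r :: real assume r: "0 < r" "r < \<rho>"
    have "c * poly p (of_real r * u) = of_real (r^k) * (c * u^k * poly q (of_real r * u))"
      unfolding pq by (simp add: power_mult_distrib mult_ac)
    hence "Re (c * poly p (of_real r * u)) = Re (of_real (r^k) * (c * u^k * poly q (of_real r * u)))"
      by (rule arg_cong[where f=Re])
    also have "\<dots> = r^k * Re (c * u^k * poly q (of_real r * u))" by simp
    finally have "Re (c * poly p (of_real r * u)) = r^k * Re (c * u^k * poly q (of_real r * u))" .
    hence "r^k * Re (c * u^k * poly q (of_real r * u)) \<le> 0" using H[OF r] by simp
    moreover have "r^k > 0" using r by simp
    ultimately show "Re (c * u^k * poly q (of_real r * u)) \<le> 0" using aux_pos_le by blast
  qed (use rho in auto)
  have "Re (c * u^k * poly q (of_real 0 * u)) \<le> 0"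
    by (rule tendsto_upperbound[OF lim ev]) simp
  thus ?thesis by simp
qed

lemma max_local:
  fixes h :: "complex poly" and c w :: complex
  assumes deg: "degree h \<ge> 1" and c: "c \<noteq> 0" and w: "norm w \<le> 1"
  and mx: "\<And>z. norm z \<le> 1 \<Longrightarrow> Re (c * poly h z) \<le> Re (c * poly h w)"
  shows "norm w = 1 \<and> Im (c * w * poly (pderiv h) w) = 0 \<and> Re (c * w * poly (pderiv h) w) > 0"
proof -
  define p where "p = pcompose h [:w,1:] - [:poly h w:]"
  have pp: "poly p t = poly h (w + t) - poly h w" for t by (simp add: p_def poly_pcompose)
  have "p \<noteq> 0"
  proof
    assume "p = 0"
    hence "pcompose h [:w,1:] = [:poly h w:]" by (simp add: p_def)
    hence "degree (pcompose h [:w,1:]) = 0" by simp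
    thus False using deg by (simp add: degree_pcompose)
  qed
  define k where "k = order 0 p"
  obtain q where pq: "p = [:0,1:]^k * q" and nd: "\<not> [:0,1:] dvd q"
    using order_decomp[OF \<open>p \<noteq> 0\<close>, of 0] unfolding k_def by auto
  have q0: "poly q 0 \<noteq> 0" using nd poly_eq_0_iff_dvd[of q 0] by simp
  have "poly p 0 = 0" by (simp add: pp)
  hence k1: "k \<ge> 1" using order_root[of p 0] \<open>p \<noteq> 0\<close> unfolding k_def by simp
  have pqt: "\<And>t. poly p t = t^k * poly q t" by (simp add: pq)
  have key: "Re (c * u^k * poly q 0) \<le> 0" if "\<rho> > 0" "\<And>r. 0 < r \<Longrightarrow> r < \<rho> \<Longrightarrow> norm (w + of_real r * u) \<le> 1" for u \<rho>
  proof (rule key_dir[OF pqt that(1)])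
    fix r :: real assume "0 < r" "r < \<rho>"
    hence "norm (w + of_real r * u) \<le> 1" using that(2) by blast
    thus "Re (c * poly p (of_real r * u)) \<le> 0" using mx[of "w + of_real r * u"] by (simp add: pp algebra_simps)
  qed
  have dir: "\<exists>\<rho>>0. \<forall>r. 0 < r \<longrightarrow> r < \<rho> \<longrightarrow> norm (w + of_real r * (- w * \<zeta>)) \<le> 1"
    if n1: "norm w = 1" and z: "Re \<zeta> > 0" for \<zeta>
  proof (intro exI[of _ "2 * Re \<zeta> / (norm \<zeta>^2 + 1)"] conjI allI impI)
    show "2 * Re \<zeta> / (norm \<zeta>^2 + 1) > 0" using z by (intro divide_pos_pos) (auto simp: add_pos_nonneg intro: add_nonneg_pos)
    fix r :: real assume r: "0 < r" "r < 2 * Re \<zeta> / (norm \<zeta>^2 + 1)"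
    have "w + of_real r * (- w * \<zeta>) = w * (1 - of_real r * \<zeta>)" by (simp add: algebra_simps)
    hence "norm (w + of_real r * (- w * \<zeta>)) = norm (1 - of_real r * \<zeta>)" using n1 by (simp add: norm_mult)
    also have "\<dots> \<le> 1"
    proof -
      have "r * (norm \<zeta>^2 + 1) < 2 * Re \<zeta>" using r by (simp add: field_simps add_pos_nonneg)
      hence "r * norm \<zeta>^2 \<le> 2 * Re \<zeta>" using r(1) by (simp add: distrib_left)
      hence "r * r * norm \<zeta>^2 \<le> 2 * r * Re \<zeta>" using r(1) using mult_left_mono[of "r * norm \<zeta>^2" "2 * Re \<zeta>" r] by (simp add: mult_ac)
      moreover have "(norm (1 - of_real r * \<zeta>))^2 = 1 - 2 * r * Re \<zeta> + r * r * norm \<zeta>^2"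
      proof -
        have "(norm (1 - of_real r * \<zeta>))^2 = (Re (1 - of_real r * \<zeta>))^2 + (Im (1 - of_real r * \<zeta>))^2"
          by (rule cmod_power2)
        also have "\<dots> = (1 - r*Re \<zeta>)^2 + (r * Im \<zeta>)^2" by simp
        also have "\<dots> = 1 - 2*r*Re \<zeta> + r*r*((Re \<zeta>)^2 + (Im \<zeta>)^2)" by (simp add: power2_eq_square algebra_simps)
        also have "(Re \<zeta>)^2 + (Im \<zeta>)^2 = norm \<zeta>^2" by (simp add: cmod_power2)
        finally show ?thesis .
      qed
      ultimately have "(norm (1 - of_real r * \<zeta>))^2 \<le> 1" by linarith
      thus ?thesis using power2_le_imp_le[of "norm (1 - of_real r * \<zeta>)" 1] by simp
    qed
    finally show "norm (w + of_real r * (- w * \<zeta>)) \<le> 1" .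
  qed
  show ?thesis
  proof (cases "norm w = 1")
    case True
    define B where "B = c * (- w)^k * poly q 0"
    have B0: "B \<noteq> 0" using c q0 True by (auto simp: B_def)
    have "\<forall>\<zeta>. Re \<zeta> > 0 \<longrightarrow> Re (B * \<zeta>^k) \<le> 0"
    proof (intro allI impI)
      fix \<zeta> :: complex assume z: "Re \<zeta> > 0"
      obtain \<rho> where "\<rho> > 0" "\<forall>r. 0 < r \<longrightarrow> r < \<rho> \<longrightarrow> norm (w + of_real r * (- w * \<zeta>)) \<le> 1"
        using dir[OF True z] by blast
      from key[OF this(1)] this(2) have "Re (c * (- w * \<zeta>)^k * poly q 0) \<le> 0" by blast
      moreover have e: "c * (- w * \<zeta>)^k * poly q 0 = B * \<zeta>^k"
        unfolding B_def power_mult_distrib by (simp only: mult_ac)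
      ultimately show "Re (B * \<zeta>^k) \<le> 0" by metis
    qed
    from AL[OF B0 k1 this] have k: "k = 1" and iB: "Im B = 0" and rB: "Re B < 0" by auto
    have dq: "poly q 0 = poly (pderiv h) w"
    proof -
      have "(poly p has_field_derivative poly q 0) (at 0)"
        unfolding CARAT_DERIV
        by (rule exI[of _ "poly q"]) (auto simp: pqt k intro: continuous_intros)
      moreover have "((\<lambda>t. poly h (t + w)) has_field_derivative poly (pderiv h) w) (at 0)"
        using DERIV_shift[of "poly h" "poly (pderiv h) w" 0 w] poly_DERIV[of h w] by simp
      hence "(poly p has_field_derivative poly (pderiv h) w) (at 0)"
        unfolding pp by (auto intro!: derivative_eq_intros simp: add.commute)
      ultimately show ?thesis by (rule DERIV_unique)
    qed
    have "c * w * poly (pderiv h) w = - B" by (simp add: B_def k dq)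
    thus ?thesis using True iB rB by simp
  next
    case False
    hence wl: "norm w < 1" using w by simp
    have anydir: "\<exists>\<rho>>0. \<forall>r. 0 < r \<longrightarrow> r < \<rho> \<longrightarrow> norm (w + of_real r * u) \<le> 1" for u
    proof (intro exI[of _ "(1 - norm w) / (norm u + 1)"] conjI allI impI)
      show "(1 - norm w) / (norm u + 1) > 0" using wl by (intro divide_pos_pos) (auto intro: add_nonneg_pos)
      fix r :: real assume r: "0 < r" "r < (1 - norm w) / (norm u + 1)"
      have "r * (norm u + 1) < 1 - norm w" using r by (simp add: field_simps add_pos_nonneg)
      hence "r * norm u \<le> 1 - norm w" using r by (simp add: distrib_left)
      hence "norm w + norm (of_real r * u) \<le> 1" using r by (simp add: norm_mult)
      thus "norm (w + of_real r * u) \<le> 1" using norm_triangle_ineq[of w "of_real r * u"] by linarith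
    qed
    define B where "B = c * poly q 0"
    have B0: "B \<noteq> 0" using c q0 by (auto simp: B_def)
    have "\<forall>\<zeta>. Re \<zeta> > 0 \<longrightarrow> Re (B * \<zeta>^k) \<le> 0"
    proof (intro allI impI)
      fix \<zeta> :: complex
      obtain \<rho> where "\<rho> > 0" "\<forall>r. 0 < r \<longrightarrow> r < \<rho> \<longrightarrow> norm (w + of_real r * \<zeta>) \<le> 1"
        using anydir by blast
      from key[OF this(1)] this(2) have "Re (c * \<zeta>^k * poly q 0) \<le> 0" by blast
      thus "Re (B * \<zeta>^k) \<le> 0" by (simp add: B_def mult_ac)
    qed
    from AL[OF B0 k1 this] have k: "k = 1" and rB: "Re B < 0" by auto
    obtain \<rho> where "\<rho> > 0" "\<forall>r. 0 < r \<longrightarrow> r < \<rho> \<longrightarrow> norm (w + of_real r * (-1)) \<le> 1"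
      using anydir by blast
    from key[OF this(1)] this(2) have "Re (c * (-1)^k * poly q 0) \<le> 0" by blast
    hence "Re B \<ge> 0" using k by (simp add: B_def)
    with rB show ?thesis by simp
  qed
qed


lemma infinite_sphere1: "infinite (sphere (0::complex) 1)"
proof
  assume fin: "finite (sphere (0::complex) 1)"
  define f where "f = (\<lambda>n::nat. cis (1 / (real n + 1)))"
  have "inj f"
  proof (rule injI)
    fix m n assume "f m = f n"
    hence "Arg (f m) = Arg (f n)" by simp
    moreover have "Arg (f n) = 1 / (real n + 1)" for n
      unfolding f_def
    proof (rule Arg_cis)
      have "0 < 1/(real n+1)" "1/(real n+1) \<le> 1" by (auto simp: field_simps)
      hence "-pi < 1/(real n+1)" "1/(real n+1) \<le> pi" using pi_gt3 by linarith+
      thus "1/(real n+1) \<in> {-pi<..pi}" by simp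
    qed
    ultimately show "m = n" by simp
  qed
  moreover have "range f \<subseteq> sphere 0 1" by (auto simp: f_def)
  ultimately have "finite (range f)" using fin finite_subset by blast
  hence "finite (UNIV :: nat set)" using \<open>inj f\<close> finite_imageD by blast
  thus False by simp
qed

theorem proposition0p1:
  fixes h :: "complex poly"
  assumes "\<not> (\<exists>m::nat. m > 1 \<and> (\<exists>g :: complex poly. h = pcompose g (monom 1 m)))"
  shows "\<exists>U. open U \<and> U \<noteq> {} \<and> U \<subseteq> ball 0 1 \<and>
           (\<forall>w\<in>U. \<forall>z\<in>cball 0 1. diff_quot h z w \<noteq> 0)"
proof -
  have deg: "degree h \<ge> 1" by (rule deg_pos[OF assms])
  define T where "T = {w. norm w = 1 \<and> (\<exists>z. norm z = 1 \<and> z \<noteq> w \<and> poly h z = poly h w)}"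
  have finT: "finite T" unfolding T_def by (rule twins_finite[OF assms])
  define ismax where "ismax = (\<lambda>c w. norm w \<le> 1 \<and> (\<forall>z. norm z \<le> 1 \<longrightarrow> Re (c * poly h z) \<le> Re (c * poly h w)))"
  have exmax: "\<exists>w. ismax c w" for c
  proof -
    have "\<exists>x\<in>cball 0 1. \<forall>y\<in>cball 0 1. Re (c * poly h y) \<le> Re (c * poly h x)"
      by (rule continuous_attains_sup) (auto intro!: continuous_intros)
    thus ?thesis unfolding ismax_def by auto
  qed
  define W where "W = (\<lambda>c. SOME w. ismax c w)"
  have Wmax: "ismax c (W c)" for c unfolding W_def using exmax someI_ex by metis
  have Wprop: "norm (W c) = 1 \<and> Im (c * W c * poly (pderiv h) (W c)) = 0 \<and> Re (c * W c * poly (pderiv h) (W c)) > 0"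
    if "c \<noteq> 0" for c
    using max_local[OF deg that, of "W c"] Wmax[of c] unfolding ismax_def by blast
  have "inj_on W (sphere 0 1)"
  proof (rule inj_onI)
    fix c1 c2 :: complex assume c1: "c1 \<in> sphere 0 1" and c2: "c2 \<in> sphere 0 1" and e: "W c1 = W c2"
    define A where "A = W c1 * poly (pderiv h) (W c1)"
    have c10: "c1 \<noteq> 0" and c20: "c2 \<noteq> 0" using c1 c2 by auto
    have p1: "Im (c1 * A) = 0" "Re (c1 * A) > 0" using Wprop[OF c10] by (auto simp: A_def mult.assoc)
    have p2: "Im (c2 * A) = 0" "Re (c2 * A) > 0" using Wprop[OF c20] e by (auto simp: A_def mult.assoc)
    have "c1 * A = of_real (cmod (c1 * A))" using p1 by (simp add: complex_eq_iff cmod_eq_Re)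
    moreover have "c2 * A = of_real (cmod (c2 * A))" using p2 by (simp add: complex_eq_iff cmod_eq_Re)
    moreover have "cmod (c1 * A) = cmod (c2 * A)" using c1 c2 by (simp add: norm_mult)
    ultimately have "c1 * A = c2 * A" by simp
    moreover have "A \<noteq> 0" using p1 by auto
    ultimately show "c1 = c2" by simp
  qed
  hence "infinite (W ` sphere 0 1)" using infinite_sphere1 finite_imageD by blast
  hence "\<not> (W ` sphere 0 1 \<subseteq> T)" using finT finite_subset by blast
  then obtain c where c: "c \<in> sphere 0 1" and cT: "W c \<notin> T" by blast
  define w0 where "w0 = W c"
  have c0: "c \<noteq> 0" using c by auto
  have w01: "norm w0 = 1" and A: "Re (c * w0 * poly (pderiv h) w0) > 0"
    using Wprop[OF c0] by (auto simp: w0_def)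
  have dnz: "poly (pderiv h) w0 \<noteq> 0" using A by auto
  have nz: "Dq h z w0 \<noteq> 0" if z: "z \<in> cball 0 1" for z
  proof
    assume D: "Dq h z w0 = 0"
    show False
    proof (cases "z = w0")
      case True thus False using D dnz by (simp add: Dq_diag)
    next
      case False
      have hz: "poly h z = poly h w0" using Dq_diff[of z w0 h] D by simp
      have "ismax c z" using Wmax[of c] z hz unfolding ismax_def w0_def by auto
      hence "norm z = 1" using max_local[OF deg c0, of z] unfolding ismax_def by blast
      hence "w0 \<in> T" unfolding T_def using w01 False hz by auto
      thus False using cT w0_def by simp
    qed
  qed
  obtain z0 where z0: "z0 \<in> cball 0 1" and z0m: "\<forall>z\<in>cball 0 1. norm (Dq h z0 w0) \<le> norm (Dq h z w0)"
  proof -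
    have "\<exists>x\<in>cball 0 1. \<forall>y\<in>cball 0 1. norm (Dq h x w0) \<le> norm (Dq h y w0)"
      by (rule continuous_attains_inf) (auto simp: Dq_def intro!: continuous_intros)
    thus ?thesis using that by blast
  qed
  define m where "m = norm (Dq h z0 w0)"
  have m0: "m > 0" using nz[OF z0] by (simp add: m_def)
  have "uniformly_continuous_on (cball 0 1 \<times> cball w0 1) (\<lambda>x. Dq h (fst x) (snd x))"
    by (rule compact_uniformly_continuous) (auto intro: compact_Times continuous_on_subset[OF Dq_cont])
  hence "\<exists>d>0. \<forall>x\<in>cball 0 1 \<times> cball w0 1. \<forall>x'\<in>cball 0 1 \<times> cball w0 1.
      dist x' x < d \<longrightarrow> dist (Dq h (fst x') (snd x')) (Dq h (fst x) (snd x)) < m"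
    unfolding uniformly_continuous_on_def using m0 by blast
  then obtain d where d0: "d > 0" and dH: "\<forall>x\<in>cball 0 1 \<times> cball w0 1. \<forall>x'\<in>cball 0 1 \<times> cball w0 1.
      dist x' x < d \<longrightarrow> dist (Dq h (fst x') (snd x')) (Dq h (fst x) (snd x)) < m" by blast
  define \<delta> where "\<delta> = min d 1"
  have \<delta>0: "\<delta> > 0" using d0 by (simp add: \<delta>_def)
  define U where "U = ball w0 \<delta> \<inter> ball 0 1"
  have "open U" unfolding U_def by (intro open_Int open_ball)
  moreover have "U \<noteq> {}"
  proof -
    define x where "x = of_real (1 - \<delta>/2) * w0"
    have d1: "\<delta> \<le> 1" by (simp add: \<delta>_def)
    have "norm x = norm (of_real (1 - \<delta>/2) :: complex) * norm w0" by (simp add: x_def norm_mult)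
    also have "\<dots> = 1 - \<delta>/2" using w01 d1 by (simp only: norm_of_real) simp
    finally have "norm x = 1 - \<delta>/2" .
    moreover have "dist w0 x = \<delta>/2"
    proof -
      have e: "w0 - x = of_real (\<delta>/2) * w0" by (simp add: x_def algebra_simps)
      have "dist w0 x = norm (of_real (\<delta>/2) * w0)" by (simp only: dist_norm e)
      also have "\<dots> = \<delta>/2" using w01 \<delta>0 by (simp add: norm_mult)
      finally show ?thesis .
    qed
    ultimately have "x \<in> U" using \<delta>0 by (simp add: U_def)
    thus ?thesis by blast
  qed
  moreover have "U \<subseteq> ball 0 1" by (simp add: U_def)
  moreover have "\<forall>w\<in>U. \<forall>z\<in>cball 0 1. diff_quot h z w \<noteq> 0"
  proof (intro ballI)
    fix w z :: complex assume w: "w \<in> U" and z: "z \<in> cball 0 1"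
    have wd: "dist w0 w < \<delta>" using w by (simp add: U_def)
    have "dist (z, w) (z, w0) < d" using wd by (simp add: dist_Pair_Pair \<delta>_def dist_commute)
    moreover have "(z, w) \<in> cball 0 1 \<times> cball w0 1" "(z, w0) \<in> cball 0 1 \<times> cball w0 1"
      using z wd by (auto simp: \<delta>_def)
    ultimately have "dist (Dq h z w) (Dq h z w0) < m"
      using dH[rule_format, of "(z,w0)" "(z,w)"] by simp
    moreover have "m \<le> norm (Dq h z w0)" using z0m z by (simp add: m_def)
    ultimately have "Dq h z w \<noteq> 0" by (auto simp: dist_norm)
    thus "diff_quot h z w \<noteq> 0" by (simp add: diff_quot_Dq)
  qed
  ultimately show ?thesis by blast
qed


end
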